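(* Let $A,B,C\in\operatorname{Sym}(n,\mathbb{R})$, where $A,B$ are linearly independent, form a non-dissipative pair, and satisfy $\operatorname{maxrank}\{A,B\}\ge17$, and where $Q_C$ vanishes on $\{Q_A=0\}\cap\{Q_B=0\}$. Assume that at least one connected component of $\mathcal{N}$ spans $\mathbb{R}^n$. Then $C$ is a linear combination of $A$ and $B$.
   Context: $Q_M(z)={}^tzMz$. Non-dissipative pair: $0$ is the only positive semidefinite element of $\operatorname{span}_{\mathbb{R}}\{A,B\}$; $\operatorname{maxrank}\{A,B\}$ is the maximal rank of elements of this span. $\mathcal{N}:=\{z\in\mathbb{R}^n:Q_A(z)=Q_B(z)=0,\ Az\text{ and }Bz\text{ linearly independent}\}$; a connected component spans $\mathbb{R}^n$ if its linear span is $\mathbb{R}^n$. No symplectic structure is assumed. *)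

theory Defs
  imports "HOL-Analysis.Analysis"
begin

definition Q :: "real^'n^'n \<Rightarrow> real^'n \<Rightarrow> real" where
  "Q M z = z \<bullet> (M *v z)"

definition sym_mat :: "real^'n^'n \<Rightarrow> bool" where
  "sym_mat M \<longleftrightarrow> transpose M = M"

definition psd :: "real^'n^'n \<Rightarrow> bool" where
  "psd M \<longleftrightarrow> (\<forall>z. Q M z \<ge> 0)"

definition pencil :: "real^'n^'n \<Rightarrow> real^'n^'n \<Rightarrow> (real^'n^'n) set" where
  "pencil A B = {a *\<^sub>R A + b *\<^sub>R B | a b. True}"

definition non_dissipative :: "real^'n^'n \<Rightarrow> real^'n^'n \<Rightarrow> bool" where
  "non_dissipative A B \<longleftrightarrow> (\<forall>M\<in>pencil A B. psd M \<longrightarrow> M = 0)"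

definition maxrank :: "real^'n^'n \<Rightarrow> real^'n^'n \<Rightarrow> nat" where
  "maxrank A B = Max (rank ` pencil A B)"

definition Nset :: "real^'n^'n \<Rightarrow> real^'n^'n \<Rightarrow> (real^'n) set" where
  "Nset A B = {z. Q A z = 0 \<and> Q B z = 0 \<and> independent {A *v z, B *v z} \<and> A *v z \<noteq> B *v z}"

end

theory Submission
  imports Defs
begin


lemma Q_sym: fixes A :: "real^'n^'n" assumes "sym_mat A" shows "x \<bullet> (A *v y) = y \<bullet> (A *v x)"
  by (metis assms sym_mat_def dot_lmul_matrix transpose_matrix_vector inner_commute)

lemma Q_has_derivative:
  fixes A :: "real^'n^'n" assumes "sym_mat A"
  shows "(Q A has_derivative (\<lambda>h. 2 * (h \<bullet> (A *v p)))) (at p)"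
proof -
  have lin: "((\<lambda>x. A *v x) has_derivative (\<lambda>x. A *v x)) (at p)"
    by (rule bounded_linear_imp_has_derivative[OF matrix_vector_mul_bounded_linear])
  have "((\<lambda>x. x \<bullet> (A *v x)) has_derivative (\<lambda>h. p \<bullet> (A *v h) + h \<bullet> (A *v p))) (at p)"
    by (rule has_derivative_inner[OF has_derivative_ident lin])
  moreover have "(\<lambda>h. p \<bullet> (A *v h) + h \<bullet> (A *v p)) = (\<lambda>h. 2 * (h \<bullet> (A *v p)))"
    using Q_sym[OF assms] by (auto simp: fun_eq_iff)
  ultimately show ?thesis unfolding Q_def[abs_def] by simp
qed

lemma curve_exists:
  fixes A B :: "real^'n^'n" and z v u w r1 r2 :: "real^'n"
  assumes sA: "sym_mat A" and sB: "sym_mat B"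
   and zA: "Q A z = 0" and zB: "Q B z = 0"
   and uw: "u = A *v z" "w = B *v z"
   and r: "r1 \<bullet> u = 1" "r1 \<bullet> w = 0" "r2 \<bullet> u = 0" "r2 \<bullet> w = 1"
   and v: "v \<bullet> u = 0" "v \<bullet> w = 0"
  shows "\<exists>\<gamma>. eventually (\<lambda>s. Q A (\<gamma> s) = 0 \<and> Q B (\<gamma> s) = 0) (at 0)
            \<and> ((\<lambda>s. (\<gamma> s - z) /\<^sub>R s) \<longlongrightarrow> v) (at 0)"
proof -
  define \<Phi> where "\<Phi> p = p - (p \<bullet> u) *\<^sub>R r1 - (p \<bullet> w) *\<^sub>R r2 + Q A p *\<^sub>R r1 + Q B p *\<^sub>R r2" for p
  define L where "L x h = h - (h \<bullet> u) *\<^sub>R r1 - (h \<bullet> w) *\<^sub>R r2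
      + (2 * (h \<bullet> (A *v x))) *\<^sub>R r1 + (2 * (h \<bullet> (B *v x))) *\<^sub>R r2" for x h
  have bl: "bounded_linear (L x)" for x
    unfolding L_def by (intro bounded_linear_intros)
  define f' where "f' x = Blinfun (L x)" for x
  have f'a: "blinfun_apply (f' x) = L x" for x
    using bl by (simp add: f'_def bounded_linear_Blinfun_apply)
  have der: "(\<Phi> has_derivative blinfun_apply (f' x)) (at x)" for x
  proof -
    have "((\<lambda>p. p - (p \<bullet> u) *\<^sub>R r1 - (p \<bullet> w) *\<^sub>R r2 + Q A p *\<^sub>R r1 + Q B p *\<^sub>R r2) has_derivative
       (\<lambda>h. h - (h \<bullet> u) *\<^sub>R r1 - (h \<bullet> w) *\<^sub>R r2
      + (2 * (h \<bullet> (A *v x))) *\<^sub>R r1 + (2 * (h \<bullet> (B *v x))) *\<^sub>R r2)) (at x)"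
      by (intro has_derivative_add has_derivative_diff has_derivative_ident has_derivative_scaleR_left
          has_derivative_inner_left Q_has_derivative sA sB)
    then show ?thesis unfolding f'a L_def \<Phi>_def[abs_def] .
  qed
  have cA: "continuous_on UNIV (\<lambda>x. A *v x)" "continuous_on UNIV (\<lambda>x. B *v x)"
    by (simp_all add: linear_continuous_on matrix_vector_mul_bounded_linear)
  have contf: "continuous_on UNIV f'"
    apply (rule continuous_on_blinfun_componentwise)
    unfolding f'a L_def
    by (intro continuous_intros cA)
  have Lz: "L z h = h + (h \<bullet> u) *\<^sub>R r1 + (h \<bullet> w) *\<^sub>R r2" for h
    unfolding L_def uw[symmetric] by (simp only: mult_2 scaleR_add_left) (simp add: algebra_simps)
  have injL: "inj (L z)"
  proof (rule linear_injective_0[THEN iffD2])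
    show "linear (L z)" using bl[of z] bounded_linear.linear by blast
    show "\<forall>h. L z h = 0 \<longrightarrow> h = 0"
    proof (intro allI impI)
      fix h assume h0: "L z h = 0"
      have "L z h \<bullet> u = 2 * (h \<bullet> u)" "L z h \<bullet> w = 2 * (h \<bullet> w)"
        unfolding Lz using r by (simp_all add: inner_add_left)
      then have "h \<bullet> u = 0" "h \<bullet> w = 0" using h0 by auto
      then show "h = 0" using h0 unfolding Lz by simp
    qed
  qed
  obtain gi where gi: "linear gi" "gi \<circ> L z = id"
    using linear_injective_left_inverse[OF _ injL] bl[of z] bounded_linear.linear by blast
  define invf where "invf = Blinfun gi"
  have "bounded_linear gi" using gi(1) linear_conv_bounded_linear by blast
  then have invfa: "blinfun_apply invf = gi" by (simp add: invf_def bounded_linear_Blinfun_apply)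
  have invf: "invf o\<^sub>L f' z = id_blinfun"
    by (rule blinfun_eqI) (simp add: invfa f'a gi(2) pointfree_idE)
  have Phiz: "\<Phi> z = z"
    using zA zB unfolding \<Phi>_def uw Q_def by (simp add: inner_commute)
  obtain U' V' g g' where U': "open U'" "U' \<subseteq> UNIV" "z \<in> U'" and V': "open V'" "\<Phi> z \<in> V'"
     and hom: "homeomorphism U' V' \<Phi> g"
     and gd: "\<And>y. y \<in> V' \<Longrightarrow> (g has_derivative (g' y)) (at y)"
     and gd': "\<And>y. y \<in> V' \<Longrightarrow> g' y = inv (blinfun_apply (f'(g y)))"
     and "\<And>y. y \<in> V' \<Longrightarrow> bij (blinfun_apply (f'(g y)))"
    by (rule inverse_function_theorem[of UNIV \<Phi> f' z invf, OF open_UNIV der contf _ invf]) auto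
  have gz: "g z = z" using hom U'(3) Phiz unfolding homeomorphism_def by metis
  have zV: "z \<in> V'" using V'(2) Phiz by simp
  have g'z: "g' z v = v"
  proof -
    have "L z v = v" unfolding Lz using v by simp
    then show ?thesis using gd'[OF zV] gz f'a injL by (metis inv_f_f)
  qed
  define \<gamma> where "\<gamma> s = g (z + s *\<^sub>R v)" for s :: real
  have dlin: "((\<lambda>s::real. z + s *\<^sub>R v) has_derivative (\<lambda>s. s *\<^sub>R v)) (at 0)"
    by (intro derivative_eq_intros) auto
  have "((\<lambda>s. g (z + s *\<^sub>R v)) has_derivative (\<lambda>s. g' z (s *\<^sub>R v))) (at 0)"
    using diff_chain_at[OF dlin, of g "g' z"] gd[OF zV] by (simp add: o_def)
  moreover have "linear (g' z)" using gd[OF zV] has_derivative_linear by blast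
  ultimately have dg: "(\<gamma> has_derivative (\<lambda>s. s *\<^sub>R v)) (at 0)"
    unfolding \<gamma>_def by (simp add: linear_scale g'z)
  have lim: "((\<lambda>s. (\<gamma> s - z) /\<^sub>R s) \<longlongrightarrow> v) (at 0)"
  proof -
    have "((\<lambda>y. norm (\<gamma> y - \<gamma> 0 - (y - 0) *\<^sub>R v) / norm (y - 0)) \<longlongrightarrow> 0) (at 0)"
      using dg unfolding has_derivative_iff_norm by auto
    then have "((\<lambda>s. norm ((\<gamma> s - z) /\<^sub>R s - v)) \<longlongrightarrow> 0) (at 0)"
    proof (rule Lim_transform_eventually)
      show "\<forall>\<^sub>F s in at 0. norm (\<gamma> s - \<gamma> 0 - (s - 0) *\<^sub>R v) / norm (s - 0) = norm ((\<gamma> s - z) /\<^sub>R s - v)"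
        unfolding eventually_at_filter
      proof (intro always_eventually allI impI)
        fix s :: real assume "s \<noteq> 0"
        then have "(\<gamma> s - z) /\<^sub>R s - v = (\<gamma> s - z - s *\<^sub>R v) /\<^sub>R s" by (simp add: algebra_simps)
        then show "norm (\<gamma> s - \<gamma> 0 - (s - 0) *\<^sub>R v) / norm (s - 0) = norm ((\<gamma> s - z) /\<^sub>R s - v)"
          by (simp add: \<gamma>_def gz divide_inverse_commute)
      qed
    qed
    then show ?thesis by (simp add: tendsto_norm_zero_iff LIM_zero_iff)
  qed
  have ev: "eventually (\<lambda>s. z + s *\<^sub>R v \<in> V') (at (0::real))"
  proof -
    have "((\<lambda>s::real. z + s *\<^sub>R v) \<longlongrightarrow> z) (at 0)"
      by (rule tendsto_eq_intros | simp)+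
    then show ?thesis using topological_tendstoD[OF _ V'(1) zV] by blast
  qed
  have Pu: "\<Phi> p \<bullet> u = Q A p" "\<Phi> p \<bullet> w = Q B p" for p
    unfolding \<Phi>_def using r by (simp_all add: inner_diff_left inner_add_left)
  have zu: "z \<bullet> u = 0" "z \<bullet> w = 0" using zA zB uw unfolding Q_def by auto
  have "eventually (\<lambda>s. Q A (\<gamma> s) = 0 \<and> Q B (\<gamma> s) = 0) (at 0)"
  proof (rule eventually_mono[OF ev])
    fix s :: real assume "z + s *\<^sub>R v \<in> V'"
    then have "\<Phi> (\<gamma> s) = z + s *\<^sub>R v" unfolding \<gamma>_def using hom unfolding homeomorphism_def by metis
    then show "Q A (\<gamma> s) = 0 \<and> Q B (\<gamma> s) = 0"
      using Pu[of "\<gamma> s"] zu v by (simp add: inner_add_left)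
  qed
  then show ?thesis using lim by blast
qed



definition gd :: "real^'n^'n \<Rightarrow> real^'n^'n \<Rightarrow> real^'n \<Rightarrow> real" where
  "gd A B x = ((A *v x) \<bullet> (A *v x)) * ((B *v x) \<bullet> (B *v x)) - ((A *v x) \<bullet> (B *v x))^2"
definition ca :: "real^'n^'n \<Rightarrow> real^'n^'n \<Rightarrow> real^'n^'n \<Rightarrow> real^'n \<Rightarrow> real" where
  "ca A B C x = (((C *v x) \<bullet> (A *v x)) * ((B *v x) \<bullet> (B *v x)) - ((C *v x) \<bullet> (B *v x)) * ((A *v x) \<bullet> (B *v x))) / gd A B x"
definition cb :: "real^'n^'n \<Rightarrow> real^'n^'n \<Rightarrow> real^'n^'n \<Rightarrow> real^'n \<Rightarrow> real" where
  "cb A B C x = (((C *v x) \<bullet> (B *v x)) * ((A *v x) \<bullet> (A *v x)) - ((C *v x) \<bullet> (A *v x)) * ((A *v x) \<bullet> (B *v x))) / gd A B x"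

lemma curve_exists':
  fixes A B :: "real^'n^'n" and z v :: "real^'n"
  assumes sA: "sym_mat A" and sB: "sym_mat B"
   and zA: "Q A z = 0" and zB: "Q B z = 0" and g: "gd A B z \<noteq> 0"
   and v: "v \<bullet> (A *v z) = 0" "v \<bullet> (B *v z) = 0"
  shows "\<exists>\<gamma>. eventually (\<lambda>s. Q A (\<gamma> s) = 0 \<and> Q B (\<gamma> s) = 0) (at 0)
            \<and> ((\<lambda>s. (\<gamma> s - z) /\<^sub>R s) \<longlongrightarrow> v) (at 0)"
proof -
  define u where "u = A *v z"
  define w where "w = B *v z"
  define d where "d = gd A B z"
  have d: "d = (u \<bullet> u) * (w \<bullet> w) - (u \<bullet> w)^2" "d \<noteq> 0" using g by (simp_all add: d_def gd_def u_def w_def)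
  define r1 where "r1 = ((w \<bullet> w) / d) *\<^sub>R u - ((u \<bullet> w) / d) *\<^sub>R w"
  define r2 where "r2 = ((u \<bullet> u) / d) *\<^sub>R w - ((u \<bullet> w) / d) *\<^sub>R u"
  have r: "r1 \<bullet> u = 1" "r1 \<bullet> w = 0" "r2 \<bullet> u = 0" "r2 \<bullet> w = 1"
    unfolding r1_def r2_def using d
    by (auto simp: inner_diff_left inner_commute[of w u] field_simps power2_eq_square)
  show ?thesis
    by (rule curve_exists[OF sA sB zA zB u_def w_def r]) (use v in \<open>simp_all add: u_def w_def\<close>)
qed

lemma tendsto_mv: "((f \<longlongrightarrow> l) F) \<Longrightarrow> ((\<lambda>s. (M::real^'n^'m) *v f s) \<longlongrightarrow> M *v l) F"
  by (rule bounded_linear.tendsto[OF matrix_vector_mul_bounded_linear])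

lemma isCont_mv: "isCont (\<lambda>x. (M::real^'n^'m) *v x) z"
  by (simp add: linear_continuous_at matrix_vector_mul_bounded_linear)

lemma Q_expand:
  fixes C :: "real^'n^'n" assumes "sym_mat C"
  shows "Q C (z + s *\<^sub>R h) = Q C z + 2 * s * (h \<bullet> (C *v z)) + s^2 * Q C h"
  using Q_sym[OF assms, of z h]
  by (simp add: Q_def matrix_vector_right_distrib matrix_vector_mult_scaleR inner_add_left inner_add_right
      algebra_simps power2_eq_square)

lemma first_order_orth:
  fixes A B C :: "real^'n^'n" and z v :: "real^'n"
  assumes sA: "sym_mat A" and sB: "sym_mat B" and sC: "sym_mat C"
   and hC: "\<forall>z. Q A z = 0 \<and> Q B z = 0 \<longrightarrow> Q C z = 0"
   and zA: "Q A z = 0" and zB: "Q B z = 0" and g: "gd A B z \<noteq> 0"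
   and v: "v \<bullet> (A *v z) = 0" "v \<bullet> (B *v z) = 0"
  shows "v \<bullet> (C *v z) = 0"
proof -
  obtain \<gamma> where ev: "eventually (\<lambda>s. Q A (\<gamma> s) = 0 \<and> Q B (\<gamma> s) = 0) (at 0)"
    and lim: "((\<lambda>s. (\<gamma> s - z) /\<^sub>R s) \<longlongrightarrow> v) (at 0)"
    using curve_exists'[OF sA sB zA zB g v] by blast
  define h where "h s = (\<gamma> s - z) /\<^sub>R s" for s
  have QCz: "Q C z = 0" using hC zA zB by blast
  have lim2: "((\<lambda>s. 2 * (h s \<bullet> (C *v z)) + s * Q C (h s)) \<longlongrightarrow> 2 * (v \<bullet> (C *v z)) + 0 * Q C v) (at 0)"
    unfolding Q_def using lim unfolding h_def[symmetric]
    by (intro tendsto_intros tendsto_mv) auto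
  have ev0: "eventually (\<lambda>s. 2 * (h s \<bullet> (C *v z)) + s * Q C (h s) = 0) (at 0)"
  proof -
    have "eventually (\<lambda>s. s \<noteq> 0 \<and> Q A (\<gamma> s) = 0 \<and> Q B (\<gamma> s) = 0) (at (0::real))"
      using ev by (simp add: eventually_at_filter eventually_mono)
    then show ?thesis
    proof (rule eventually_mono)
      fix s :: real assume s: "s \<noteq> 0 \<and> Q A (\<gamma> s) = 0 \<and> Q B (\<gamma> s) = 0"
      then have "\<gamma> s = z + s *\<^sub>R h s" by (simp add: h_def)
      moreover have "Q C (\<gamma> s) = 0" using hC s by blast
      ultimately have "0 = s * (2 * (h s \<bullet> (C *v z)) + s * Q C (h s))"
        using Q_expand[OF sC, of z s "h s"] QCz by (simp add: algebra_simps power2_eq_square)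
      then show "2 * (h s \<bullet> (C *v z)) + s * Q C (h s) = 0" using s by simp
    qed
  qed
  have "((\<lambda>s. 2 * (h s \<bullet> (C *v z)) + s * Q C (h s)) \<longlongrightarrow> 0) (at (0::real))"
    by (rule Lim_transform_eventually[OF tendsto_const]) (use ev0 in \<open>simp add: eventually_mono\<close>)
  then have "2 * (v \<bullet> (C *v z)) + 0 * Q C v = 0"
    using tendsto_unique[OF _ lim2] by (simp add: trivial_limit_at)
  then show ?thesis by simp
qed

lemma first_order:
  fixes A B C :: "real^'n^'n" and z :: "real^'n"
  assumes sA: "sym_mat A" and sB: "sym_mat B" and sC: "sym_mat C"
   and hC: "\<forall>z. Q A z = 0 \<and> Q B z = 0 \<longrightarrow> Q C z = 0"
   and zA: "Q A z = 0" and zB: "Q B z = 0" and g: "gd A B z \<noteq> 0"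
  shows "C *v z = ca A B C z *\<^sub>R (A *v z) + cb A B C z *\<^sub>R (B *v z)"
proof -
  define u where "u = A *v z"
  define w where "w = B *v z"
  define c where "c = C *v z"
  define d where "d = gd A B z"
  have d: "d = (u \<bullet> u) * (w \<bullet> w) - (u \<bullet> w)^2" "d \<noteq> 0" using g by (simp_all add: d_def gd_def u_def w_def)
  define a where "a = ca A B C z"
  define b where "b = cb A B C z"
  have a: "a = ((c \<bullet> u) * (w \<bullet> w) - (c \<bullet> w) * (u \<bullet> w)) / d"
    and b: "b = ((c \<bullet> w) * (u \<bullet> u) - (c \<bullet> u) * (u \<bullet> w)) / d"
    by (simp_all add: a_def b_def ca_def cb_def c_def u_def w_def d_def)
  define y where "y = c - a *\<^sub>R u - b *\<^sub>R w"
  have yu1: "y \<bullet> u = c \<bullet> u - a * (u \<bullet> u) - b * (u \<bullet> w)" "y \<bullet> w = c \<bullet> w - a * (u \<bullet> w) - b * (w \<bullet> w)"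
    by (simp_all add: y_def inner_diff_left inner_commute[of w u])
  have yu: "y \<bullet> u = 0" "y \<bullet> w = 0"
    unfolding yu1 a b using d(2) unfolding d(1)
    by (auto simp: field_simps power2_eq_square)
  have "y \<bullet> c = 0"
    using first_order_orth[OF sA sB sC hC zA zB g, of y] yu by (simp add: u_def w_def c_def)
  then have "y \<bullet> y = 0" using yu by (simp add: y_def inner_diff_right)
  then have "c - a *\<^sub>R u - b *\<^sub>R w = 0" by (simp add: y_def)
  then show ?thesis by (simp add: a_def b_def c_def u_def w_def algebra_simps)
qed



lemma continuous_mv[continuous_intros]: "continuous F g \<Longrightarrow> continuous F (\<lambda>x. (M::real^'n^'m) *v g x)"
  by (rule bounded_linear.continuous[OF matrix_vector_mul_bounded_linear])

lemma isCont_gd: "isCont (gd A B) z"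
  unfolding gd_def[abs_def] by (intro continuous_intros)

lemma isCont_ca: "gd A B z \<noteq> 0 \<Longrightarrow> isCont (ca A B C) z"
  unfolding ca_def[abs_def] by (intro continuous_intros isCont_gd) auto

lemma isCont_cb: "gd A B z \<noteq> 0 \<Longrightarrow> isCont (cb A B C) z"
  unfolding cb_def[abs_def] by (intro continuous_intros isCont_gd) auto

lemma second_order:
  fixes A B C :: "real^'n^'n" and z v x :: "real^'n"
  assumes sA: "sym_mat A" and sB: "sym_mat B" and sC: "sym_mat C"
   and hC: "\<forall>z. Q A z = 0 \<and> Q B z = 0 \<longrightarrow> Q C z = 0"
   and zA: "Q A z = 0" and zB: "Q B z = 0" and g: "gd A B z \<noteq> 0"
   and v: "v \<bullet> (A *v z) = 0" "v \<bullet> (B *v z) = 0"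
   and x: "x \<bullet> (A *v z) = 0" "x \<bullet> (B *v z) = 0"
  shows "x \<bullet> (C *v v) - ca A B C z * (x \<bullet> (A *v v)) - cb A B C z * (x \<bullet> (B *v v)) = 0"
proof -
  obtain \<gamma> where ev: "eventually (\<lambda>s. Q A (\<gamma> s) = 0 \<and> Q B (\<gamma> s) = 0) (at 0)"
    and lim: "((\<lambda>s. (\<gamma> s - z) /\<^sub>R s) \<longlongrightarrow> v) (at 0)"
    using curve_exists'[OF sA sB zA zB g v] by blast
  define h where "h s = (\<gamma> s - z) /\<^sub>R s" for s
  have hl: "(h \<longlongrightarrow> v) (at 0)" using lim by (simp add: h_def[abs_def])
  have ev1: "eventually (\<lambda>s. \<gamma> s = z + s *\<^sub>R h s) (at (0::real))"
    unfolding eventually_at_filter by (rule always_eventually) (simp add: h_def)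
  have "((\<lambda>s. z + s *\<^sub>R h s) \<longlongrightarrow> z + 0 *\<^sub>R v) (at (0::real))"
    by (intro tendsto_intros hl)
  then have gl: "(\<gamma> \<longlongrightarrow> z) (at 0)"
    using Lim_transform_eventually[of "\<lambda>s. z + s *\<^sub>R h s" z "at 0" \<gamma>] ev1
    by (simp add: eventually_mono)
  have cal: "((\<lambda>s. ca A B C (\<gamma> s)) \<longlongrightarrow> ca A B C z) (at 0)"
    by (rule isCont_tendsto_compose[OF isCont_ca[OF g] gl])
  have cbl: "((\<lambda>s. cb A B C (\<gamma> s)) \<longlongrightarrow> cb A B C z) (at 0)"
    by (rule isCont_tendsto_compose[OF isCont_cb[OF g] gl])
  have gdl: "eventually (\<lambda>s. gd A B (\<gamma> s) \<noteq> 0) (at 0)"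
    by (rule tendsto_imp_eventually_ne[OF isCont_tendsto_compose[OF isCont_gd gl] g])
  define F where "F s = x \<bullet> (C *v h s) - ca A B C (\<gamma> s) * (x \<bullet> (A *v h s)) - cb A B C (\<gamma> s) * (x \<bullet> (B *v h s))" for s
  have Fl: "(F \<longlongrightarrow> x \<bullet> (C *v v) - ca A B C z * (x \<bullet> (A *v v)) - cb A B C z * (x \<bullet> (B *v v))) (at 0)"
    unfolding F_def by (intro tendsto_intros tendsto_mv hl cal cbl)
  have xC: "x \<bullet> (C *v z) = 0" by (rule first_order_orth[OF sA sB sC hC zA zB g x])
  have evF: "eventually (\<lambda>s. F s = 0) (at 0)"
  proof -
    have "eventually (\<lambda>s. s \<noteq> 0 \<and> (Q A (\<gamma> s) = 0 \<and> Q B (\<gamma> s) = 0) \<and> gd A B (\<gamma> s) \<noteq> 0 \<and> \<gamma> s = z + s *\<^sub>R h s) (at (0::real))"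
      using ev gdl ev1 by (simp add: eventually_at_filter eventually_conj_iff eventually_mono)
    then show ?thesis
    proof (rule eventually_mono)
      fix s :: real assume s: "s \<noteq> 0 \<and> (Q A (\<gamma> s) = 0 \<and> Q B (\<gamma> s) = 0) \<and> gd A B (\<gamma> s) \<noteq> 0 \<and> \<gamma> s = z + s *\<^sub>R h s"
      have fo: "C *v \<gamma> s = ca A B C (\<gamma> s) *\<^sub>R (A *v \<gamma> s) + cb A B C (\<gamma> s) *\<^sub>R (B *v \<gamma> s)"
        using first_order[OF sA sB sC hC] s by blast
      have "x \<bullet> (C *v \<gamma> s) = ca A B C (\<gamma> s) * (x \<bullet> (A *v \<gamma> s)) + cb A B C (\<gamma> s) * (x \<bullet> (B *v \<gamma> s))"
        unfolding fo by (simp add: inner_add_right)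
      then have "s * F s = 0"
        using s xC x unfolding F_def
        by (simp add: matrix_vector_right_distrib matrix_vector_mult_scaleR inner_add_right algebra_simps)
      then show "F s = 0" using s by simp
    qed
  qed
  have "(F \<longlongrightarrow> 0) (at (0::real))"
    by (rule Lim_transform_eventually[OF tendsto_const]) (use evF in \<open>simp add: eventually_mono\<close>)
  then show ?thesis using tendsto_unique[OF _ Fl] by (simp add: trivial_limit_at)
qed



lemma rank_le4:
  fixes A B C :: "real^'n^'n" and z :: "real^'n"
  assumes sA: "sym_mat A" and sB: "sym_mat B" and sC: "sym_mat C"
   and hC: "\<forall>z. Q A z = 0 \<and> Q B z = 0 \<longrightarrow> Q C z = 0"
   and zA: "Q A z = 0" and zB: "Q B z = 0" and g: "gd A B z \<noteq> 0"
  shows "rank (C - ca A B C z *\<^sub>R A - cb A B C z *\<^sub>R B) \<le> 4"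
proof -
  define a where "a = ca A B C z"
  define b where "b = cb A B C z"
  define M where "M = C - a *\<^sub>R A - b *\<^sub>R B"
  have Mv: "M *v y = C *v y - a *\<^sub>R (A *v y) - b *\<^sub>R (B *v y)" for y
    by (simp add: M_def matrix_vector_mult_diff_rdistrib scaleR_matrix_vector_assoc)
  define u where "u = A *v z"
  define w where "w = B *v z"
  define d where "d = gd A B z"
  have d: "d = (u \<bullet> u) * (w \<bullet> w) - (u \<bullet> w)^2" "d \<noteq> 0" using g by (simp_all add: d_def gd_def u_def w_def)
  define r1 where "r1 = ((w \<bullet> w) / d) *\<^sub>R u - ((u \<bullet> w) / d) *\<^sub>R w"
  define r2 where "r2 = ((u \<bullet> u) / d) *\<^sub>R w - ((u \<bullet> w) / d) *\<^sub>R u"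
  have r: "r1 \<bullet> u = 1" "r1 \<bullet> w = 0" "r2 \<bullet> u = 0" "r2 \<bullet> w = 1"
    unfolding r1_def r2_def using d
    by (auto simp: inner_diff_left inner_commute[of w u] field_simps power2_eq_square)
  have su: "u \<in> span {u, w}" "w \<in> span {u, w}" by (simp_all add: span_base)
  have rspan: "r1 \<in> span {u, w}" "r2 \<in> span {u, w}"
    unfolding r1_def r2_def by (intro span_diff span_scale su)+
  have perp: "M *v t \<in> span {u, w}" if t: "t \<bullet> u = 0" "t \<bullet> w = 0" for t
  proof -
    define m where "m = M *v t"
    have xm: "x \<bullet> m = 0" if "x \<bullet> u = 0" "x \<bullet> w = 0" for x
      using second_order[OF sA sB sC hC zA zB g, of t x] t that
      by (simp add: m_def Mv u_def w_def a_def b_def inner_diff_right)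
    define m' where "m' = m - (m \<bullet> u) *\<^sub>R r1 - (m \<bullet> w) *\<^sub>R r2"
    have m'u: "m' \<bullet> u = 0" "m' \<bullet> w = 0" unfolding m'_def using r by (simp_all add: inner_diff_left)
    have "m' \<bullet> m = 0" using xm[OF m'u] by (simp add: inner_commute)
    moreover have "m' \<bullet> r1 = 0" "m' \<bullet> r2 = 0"
      unfolding r1_def r2_def using m'u by (simp_all add: inner_diff_right)
    ultimately have "m' \<bullet> m' = 0" by (simp add: m'_def inner_diff_right)
    then have "m' = 0" by simp
    moreover have "m = m' + (m \<bullet> u) *\<^sub>R r1 + (m \<bullet> w) *\<^sub>R r2" by (simp add: m'_def)
    ultimately have "m = (m \<bullet> u) *\<^sub>R r1 + (m \<bullet> w) *\<^sub>R r2" by simp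
    then show ?thesis unfolding m_def[symmetric] by (metis rspan span_add span_scale)
  qed
  define S where "S = {u, w, M *v r1, M *v r2}"
  have rng: "range (\<lambda>y. M *v y) \<subseteq> span S"
  proof clarify
    fix y
    define t where "t = y - (y \<bullet> u) *\<^sub>R r1 - (y \<bullet> w) *\<^sub>R r2"
    have "t \<bullet> u = 0" "t \<bullet> w = 0" unfolding t_def using r by (simp_all add: inner_diff_left)
    then have "M *v t \<in> span S" using perp span_mono[of "{u,w}" S] by (auto simp: S_def)
    moreover have "M *v y = M *v t + (y \<bullet> u) *\<^sub>R (M *v r1) + (y \<bullet> w) *\<^sub>R (M *v r2)"
      by (simp add: t_def matrix_vector_mult_diff_distrib matrix_vector_mult_scaleR)
    moreover have "M *v r1 \<in> span S" "M *v r2 \<in> span S" by (auto simp: S_def intro: span_base)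
    ultimately show "M *v y \<in> span S" by (metis span_add span_scale)
  qed
  have "card S \<le> 4"
    using card_length[of "[u, w, M *v r1, M *v r2]"] by (simp add: S_def)
  have "rank M \<le> card S"
    unfolding rank_dim_range by (rule dim_le_card[OF rng]) (simp add: S_def)
  then show ?thesis using \<open>card S \<le> 4\<close> by (simp add: M_def a_def b_def)
qed

lemma rank_add_le:
  fixes X Y :: "real^'n^'m"
  shows "rank (X + Y) \<le> rank X + rank Y"
proof -
  obtain BX where BX: "BX \<subseteq> range (\<lambda>x. X *v x)" "independent BX" "range (\<lambda>x. X *v x) \<subseteq> span BX"
      "card BX = dim (range (\<lambda>x. X *v x))" by (rule basis_exists)
  obtain BY where BY: "BY \<subseteq> range (\<lambda>x. Y *v x)" "independent BY" "range (\<lambda>x. Y *v x) \<subseteq> span BY"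
      "card BY = dim (range (\<lambda>x. Y *v x))" by (rule basis_exists)
  have fin: "finite BX" "finite BY" using BX(2) BY(2) finiteI_independent by auto
  have "range (\<lambda>x. (X + Y) *v x) \<subseteq> span (BX \<union> BY)"
  proof clarify
    fix x
    have "X *v x \<in> span (BX \<union> BY)" "Y *v x \<in> span (BX \<union> BY)"
      using BX(3) BY(3) span_mono[of BX "BX \<union> BY"] span_mono[of BY "BX \<union> BY"] by auto
    then show "(X + Y) *v x \<in> span (BX \<union> BY)" by (simp add: matrix_vector_mult_add_rdistrib span_add)
  qed
  then have "rank (X + Y) \<le> card (BX \<union> BY)"
    unfolding rank_dim_range by (rule dim_le_card) (use fin in auto)
  also have "\<dots> \<le> card BX + card BY" by (rule card_Un_le)
  finally show ?thesis using BX(4) BY(4) by (simp add: rank_dim_range)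
qed

lemma rank_scale_le:
  fixes X :: "real^'n^'m"
  shows "rank (c *\<^sub>R X) \<le> rank X"
proof -
  have "range (\<lambda>x. (c *\<^sub>R X) *v x) \<subseteq> span (range (\<lambda>x. X *v x))"
  proof clarify
    fix x
    have "X *v x \<in> span (range (\<lambda>x. X *v x))" by (rule span_base) simp
    then show "(c *\<^sub>R X) *v x \<in> span (range (\<lambda>x. X *v x))"
      by (simp add: scaleR_matrix_vector_assoc[symmetric] span_scale)
  qed
  then have "dim (range (\<lambda>x. (c *\<^sub>R X) *v x)) \<le> dim (span (range (\<lambda>x. X *v x)))" by (rule dim_subset)
  then show ?thesis by (simp add: rank_dim_range)
qed

lemma rank_diff_le:
  fixes X Y :: "real^'n^'m"
  shows "rank (X - Y) \<le> rank X + rank Y"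
proof -
  have "X - Y = X + (-1) *\<^sub>R Y" by simp
  then show ?thesis using rank_add_le[of X "(-1) *\<^sub>R Y"] rank_scale_le[of "-1" Y] by simp
qed

lemma maxrank_witness:
  fixes A B :: "real^'n^'n"
  assumes "maxrank A B \<ge> k"
  shows "\<exists>\<alpha> \<beta>. rank (\<alpha> *\<^sub>R A + \<beta> *\<^sub>R B) \<ge> k"
proof -
  have fin: "finite (rank ` pencil A B)"
    by (rule finite_subset[of _ "{..CARD('n)}"]) (auto simp: rank_bound intro: le_trans[OF rank_bound])
  have ne: "rank ` pencil A B \<noteq> {}" by (auto simp: pencil_def)
  have "maxrank A B \<in> rank ` pencil A B" unfolding maxrank_def by (rule Max_in[OF fin ne])
  then obtain M where "M \<in> pencil A B" "maxrank A B = rank M" by auto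
  then obtain a b where "M = a *\<^sub>R A + b *\<^sub>R B" by (auto simp: pencil_def)
  then show ?thesis using assms \<open>maxrank A B = rank M\<close> by metis
qed

lemma comb2:
  fixes A B :: "'a::real_vector"
  assumes "D = d1 * e2 - d2 * e1" "D \<noteq> 0"
  shows "\<alpha> *\<^sub>R A + \<beta> *\<^sub>R B = ((\<alpha> * e2 - \<beta> * e1) / D) *\<^sub>R (d1 *\<^sub>R A + d2 *\<^sub>R B)
     + ((\<beta> * d1 - \<alpha> * d2) / D) *\<^sub>R (e1 *\<^sub>R A + e2 *\<^sub>R B)"
proof -
  define l where "l = (\<alpha> * e2 - \<beta> * e1) / D"
  define m where "m = (\<beta> * d1 - \<alpha> * d2) / D"
  have n1: "(\<alpha> * e2 - \<beta> * e1) * d1 + (\<beta> * d1 - \<alpha> * d2) * e1 = \<alpha> * D"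
    and n2: "(\<alpha> * e2 - \<beta> * e1) * d2 + (\<beta> * d1 - \<alpha> * d2) * e2 = \<beta> * D"
    unfolding assms(1) by (simp_all add: algebra_simps)
  have "l * d1 + m * e1 = ((\<alpha> * e2 - \<beta> * e1) * d1 + (\<beta> * d1 - \<alpha> * d2) * e1) / D"
    "l * d2 + m * e2 = ((\<alpha> * e2 - \<beta> * e1) * d2 + (\<beta> * d1 - \<alpha> * d2) * e2) / D"
    by (simp_all add: l_def m_def add_divide_distrib)
  then have "l * d1 + m * e1 = \<alpha>" "l * d2 + m * e2 = \<beta>"
    unfolding n1 n2 using assms(2) by simp_all
  moreover have "l *\<^sub>R (d1 *\<^sub>R A + d2 *\<^sub>R B) + m *\<^sub>R (e1 *\<^sub>R A + e2 *\<^sub>R B)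
      = (l * d1 + m * e1) *\<^sub>R A + (l * d2 + m * e2) *\<^sub>R B"
    by (simp add: algebra_simps)
  ultimately show ?thesis by (simp add: l_def m_def)
qed

lemma indep_gd:
  fixes u w :: "real^'n"
  assumes "independent {u, w}" "u \<noteq> w"
  shows "(u \<bullet> u) * (w \<bullet> w) - (u \<bullet> w)^2 \<noteq> 0"
proof
  assume h: "(u \<bullet> u) * (w \<bullet> w) - (u \<bullet> w)^2 = 0"
  have w0: "w \<noteq> 0" using assms(1) dependent_zero[of "{u, w}"] by auto
  define y where "y = (w \<bullet> w) *\<^sub>R u - (u \<bullet> w) *\<^sub>R w"
  have "y \<bullet> y = (w \<bullet> w) * ((u \<bullet> u) * (w \<bullet> w) - (u \<bullet> w)^2)"
    by (simp add: y_def inner_diff_left inner_diff_right inner_commute[of w u] algebra_simps power2_eq_square)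
  then have "y = 0" using h by simp
  then have yy: "(w \<bullet> w) *\<^sub>R u = (u \<bullet> w) *\<^sub>R w" by (simp add: y_def)
  have ww: "w \<bullet> w \<noteq> 0" using w0 by simp
  have "u = (1 / (w \<bullet> w)) *\<^sub>R ((w \<bullet> w) *\<^sub>R u)" using ww by simp
  also have "\<dots> = ((u \<bullet> w) / (w \<bullet> w)) *\<^sub>R w" unfolding yy by simp
  finally have "u = ((u \<bullet> w) / (w \<bullet> w)) *\<^sub>R w" .
  then have "u \<in> span {w}" by (metis span_base span_scale singletonI)
  then show False using assms independent_insert[of u "{w}"] by auto
qed

lemma gd_comb:
  fixes u w :: "real^'n"
  assumes "(u \<bullet> u) * (w \<bullet> w) - (u \<bullet> w)^2 \<noteq> 0" "d1 *\<^sub>R u + d2 *\<^sub>R w = 0"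
  shows "d1 = 0 \<and> d2 = 0"
proof -
  have e1: "d1 * (u \<bullet> u) + d2 * (u \<bullet> w) = 0"
    using arg_cong[OF assms(2), of "\<lambda>x. x \<bullet> u"] by (simp add: inner_add_left inner_commute[of w u])
  have e2: "d1 * (u \<bullet> w) + d2 * (w \<bullet> w) = 0"
    using arg_cong[OF assms(2), of "\<lambda>x. x \<bullet> w"] by (simp add: inner_add_left)
  have q1: "d1 * ((u \<bullet> u) * (w \<bullet> w) - (u \<bullet> w)^2) = (w \<bullet> w) * (d1 * (u \<bullet> u) + d2 * (u \<bullet> w)) - (u \<bullet> w) * (d1 * (u \<bullet> w) + d2 * (w \<bullet> w))"
    by (simp add: algebra_simps power2_eq_square)
  have q2: "d2 * ((u \<bullet> u) * (w \<bullet> w) - (u \<bullet> w)^2) = (u \<bullet> u) * (d1 * (u \<bullet> w) + d2 * (w \<bullet> w)) - (u \<bullet> w) * (d1 * (u \<bullet> u) + d2 * (u \<bullet> w))"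
    by (simp add: algebra_simps power2_eq_square)
  have "d1 * ((u \<bullet> u) * (w \<bullet> w) - (u \<bullet> w)^2) = 0" "d2 * ((u \<bullet> u) * (w \<bullet> w) - (u \<bullet> w)^2) = 0"
    unfolding q1 q2 e1 e2 by simp_all
  then show ?thesis using assms(1) by simp
qed



lemma par_lemma:
  fixes e1 e2 d1 d2 X Y :: real
  assumes "e1 \<noteq> 0 \<or> e2 \<noteq> 0" "e1 * X + e2 * Y = 0" "d1 * e2 - d2 * e1 = 0"
  shows "d1 * X + d2 * Y = 0"
proof -
  have "e1 * (d1 * X + d2 * Y) = d1 * (e1 * X + e2 * Y) - (d1 * e2 - d2 * e1) * Y"
    "e2 * (d1 * X + d2 * Y) = d2 * (e1 * X + e2 * Y) + (d1 * e2 - d2 * e1) * X"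
    by (simp_all add: algebra_simps)
  then have "e1 * (d1 * X + d2 * Y) = 0" "e2 * (d1 * X + d2 * Y) = 0" using assms(2,3) by simp_all
  then show ?thesis using assms(1) by auto
qed

theorem theorem3p12:
  fixes A B C :: "real^'n^'n"
  assumes "sym_mat A" and "sym_mat B" and "sym_mat C"
    and "independent {A, B}" and "A \<noteq> B"
    and "non_dissipative A B"
    and "maxrank A B \<ge> 17"
    and "\<forall>z. Q A z = 0 \<and> Q B z = 0 \<longrightarrow> Q C z = 0"
    and "\<exists>z\<in>Nset A B. span (connected_component_set (Nset A B) z) = UNIV"
  shows "\<exists>a b. C = a *\<^sub>R A + b *\<^sub>R B"
proof -
  note sA = assms(1) and sB = assms(2) and sC = assms(3) and hC = assms(8)
  obtain z0 where z0: "z0 \<in> Nset A B" and spK0: "span (connected_component_set (Nset A B) z0) = UNIV"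
    using assms(9) by blast
  define K where "K = connected_component_set (Nset A B) z0"
  have spK: "span K = UNIV" using spK0 by (simp add: K_def)
  have NV: "Q A x = 0 \<and> Q B x = 0 \<and> gd A B x \<noteq> 0" if "x \<in> Nset A B" for x
    using that indep_gd[of "A *v x" "B *v x"] by (auto simp: Nset_def gd_def)
  have KN: "K \<subseteq> Nset A B" by (simp add: K_def connected_component_subset)
  have KV: "Q A x = 0 \<and> Q B x = 0 \<and> gd A B x \<noteq> 0" if "x \<in> K" for x using KN NV that by blast
  have z0K: "z0 \<in> K" using z0 by (simp add: K_def connected_component_refl)
  have conK: "connected K" by (simp add: K_def connected_connected_component)
  define pa where "pa = ca A B C"
  define pb where "pb = cb A B C"
  have fo: "C *v x = pa x *\<^sub>R (A *v x) + pb x *\<^sub>R (B *v x)" if "x \<in> K" for x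
    using first_order[OF sA sB sC hC] KV[OF that] by (simp add: pa_def pb_def)
  have cpa: "continuous_on K pa"
    by (rule continuous_at_imp_continuous_on) (auto simp: pa_def intro: isCont_ca dest!: KV)
  have cpb: "continuous_on K pb"
    by (rule continuous_at_imp_continuous_on) (auto simp: pb_def intro: isCont_cb dest!: KV)
  show ?thesis
  proof (cases "\<forall>x\<in>K. pa x = pa z0 \<and> pb x = pb z0")
    case True
    define D where "D = C - pa z0 *\<^sub>R A - pb z0 *\<^sub>R B"
    have Dv: "D *v y = C *v y - pa z0 *\<^sub>R (A *v y) - pb z0 *\<^sub>R (B *v y)" for y
      by (simp add: D_def matrix_vector_mult_diff_rdistrib scaleR_matrix_vector_assoc)
    have sub: "subspace {x. D *v x = 0}"
      unfolding subspace_def by (simp add: matrix_vector_right_distrib matrix_vector_mult_scaleR)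
    have "K \<subseteq> {x. D *v x = 0}" using True fo Dv by auto
    then have "span K \<subseteq> {x. D *v x = 0}" by (rule span_minimal[OF _ sub])
    then have "\<forall>x. D *v x = 0 *v x" using spK by auto
    then have "D = 0" by (simp add: matrix_eq)
    then have "C = pa z0 *\<^sub>R A + pb z0 *\<^sub>R B" by (simp add: D_def algebra_simps)
    then show ?thesis by blast
  next
    case False
    then obtain z1 where z1: "z1 \<in> K" "pa z1 \<noteq> pa z0 \<or> pb z1 \<noteq> pb z0" by auto
    define f where "f x = (pa x - pa z0) * (pa z1 - pa z0) + (pb x - pb z0) * (pb z1 - pb z0)" for x
    have cf: "continuous_on K f" unfolding f_def by (intro continuous_intros cpa cpb)
    have conf: "connected (f ` K)" by (rule connected_continuous_image[OF cf conK])
    define c0 where "c0 = f z1"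
    have "(pa z1 - pa z0)^2 + (pb z1 - pb z0)^2 > 0" using z1(2) by (auto simp: sum_power2_gt_zero_iff)
    then have c0: "c0 > 0" by (simp add: c0_def f_def power2_eq_square)
    have "f z0 = 0" by (simp add: f_def)
    then have f0: "0 \<in> f ` K" using z0K by (metis image_eqI)
    have f1: "c0 \<in> f ` K" using z1(1) by (simp add: c0_def)
    have Icc: "{0..c0} \<subseteq> f ` K"
      by (rule connected_contains_Icc[OF conf f0 f1])
    obtain Bs where Bs: "Bs \<subseteq> K" "independent Bs" "K \<subseteq> span Bs" by (rule maximal_independent_subset)
    have finB: "finite Bs" using Bs(2) finiteI_independent by blast
    have spB: "span Bs = UNIV"
      using span_mono[OF Bs(3)] spK by (simp add: span_span) (metis top.extremum_uniqueI)
    have "infinite {0..c0}" using c0 by simp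
    then have "{0..c0} - f ` Bs \<noteq> {}"
      by (metis Diff_eq_empty_iff finite_subset finite_imageI finB)
    then obtain c where c: "c \<in> {0..c0}" "c \<notin> f ` Bs" by blast
    obtain z where z: "z \<in> K" "f z = c" using Icc c(1) by auto
    have neq: "pa b - pa z \<noteq> 0 \<or> pb b - pb z \<noteq> 0" if "b \<in> Bs" for b
    proof (rule ccontr)
      assume "\<not> (pa b - pa z \<noteq> 0 \<or> pb b - pb z \<noteq> 0)"
      then have "f b = f z" by (simp add: f_def)
      then show False using c(2) z(2) that by auto
    qed
    have key: "(pa b - pa z) * (b \<bullet> (A *v z)) + (pb b - pb z) * (b \<bullet> (B *v z)) = 0" if "b \<in> Bs" for b
    proof -
      have bK: "b \<in> K" using that Bs(1) by blast
      have "b \<bullet> (C *v z) = pa z * (b \<bullet> (A *v z)) + pb z * (b \<bullet> (B *v z))"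
        using fo[OF z(1)] by (simp add: inner_add_right)
      moreover have "z \<bullet> (C *v b) = pa b * (z \<bullet> (A *v b)) + pb b * (z \<bullet> (B *v b))"
        using fo[OF bK] by (simp add: inner_add_right)
      moreover have "b \<bullet> (C *v z) = z \<bullet> (C *v b)" "b \<bullet> (A *v z) = z \<bullet> (A *v b)" "b \<bullet> (B *v z) = z \<bullet> (B *v b)"
        using Q_sym[OF sC] Q_sym[OF sA] Q_sym[OF sB] by auto
      ultimately show ?thesis by (simp add: algebra_simps)
    qed
    have Bne: "Bs \<noteq> {}"
    proof
      assume "Bs = {}"
      then have "(UNIV :: (real^'n) set) = {0}" using spB by simp
      moreover have "axis undefined (1::real) \<noteq> (0 :: real^'n)" by (simp add: axis_eq_0_iff)
      ultimately show False by blast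
    qed
    then obtain b0 where b0: "b0 \<in> Bs" by blast
    define d1 where "d1 = pa b0 - pa z"
    define d2 where "d2 = pb b0 - pb z"
    have gz: "gd A B z \<noteq> 0" using KV[OF z(1)] by blast
    have dne: "d1 \<noteq> 0 \<or> d2 \<noteq> 0" using neq[OF b0] by (simp add: d1_def d2_def)
    show ?thesis
    proof (cases "\<exists>b\<in>Bs. d1 * (pb b - pb z) - d2 * (pa b - pa z) \<noteq> 0")
      case True
      then obtain b where b: "b \<in> Bs" "d1 * (pb b - pb z) - d2 * (pa b - pa z) \<noteq> 0" by blast
      obtain \<alpha> \<beta> where ab: "rank (\<alpha> *\<^sub>R A + \<beta> *\<^sub>R B) \<ge> 17" using maxrank_witness[OF assms(7)] by blast
      define Mx where "Mx x = C - pa x *\<^sub>R A - pb x *\<^sub>R B" for x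
      have rk4: "rank (Mx x) \<le> 4" if "x \<in> K" for x
        using rank_le4[OF sA sB sC hC] KV[OF that] by (simp add: Mx_def pa_def pb_def)
      have E: "Mx z - Mx x = (pa x - pa z) *\<^sub>R A + (pb x - pb z) *\<^sub>R B" for x
        by (simp add: Mx_def algebra_simps)
      have rk8: "rank ((pa x - pa z) *\<^sub>R A + (pb x - pb z) *\<^sub>R B) \<le> 8" if "x \<in> K" for x
        using rank_diff_le[of "Mx z" "Mx x"] rk4[OF z(1)] rk4[OF that] unfolding E by simp
      define e1 where "e1 = pa b - pa z"
      define e2 where "e2 = pb b - pb z"
      define DD where "DD = d1 * e2 - d2 * e1"
      have DD: "DD \<noteq> 0" using b(2) by (simp add: DD_def e1_def e2_def)
      have r1: "rank (d1 *\<^sub>R A + d2 *\<^sub>R B) \<le> 8" using rk8[of b0] b0 Bs(1) by (auto simp: d1_def d2_def)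
      have r2: "rank (e1 *\<^sub>R A + e2 *\<^sub>R B) \<le> 8" using rk8[of b] b Bs(1) by (auto simp: e1_def e2_def)
      have "\<alpha> *\<^sub>R A + \<beta> *\<^sub>R B = ((\<alpha> * e2 - \<beta> * e1) / DD) *\<^sub>R (d1 *\<^sub>R A + d2 *\<^sub>R B)
          + ((\<beta> * d1 - \<alpha> * d2) / DD) *\<^sub>R (e1 *\<^sub>R A + e2 *\<^sub>R B)"
        by (rule comb2[OF DD_def DD])
      then have "rank (\<alpha> *\<^sub>R A + \<beta> *\<^sub>R B) \<le> rank (((\<alpha> * e2 - \<beta> * e1) / DD) *\<^sub>R (d1 *\<^sub>R A + d2 *\<^sub>R B))
          + rank (((\<beta> * d1 - \<alpha> * d2) / DD) *\<^sub>R (e1 *\<^sub>R A + e2 *\<^sub>R B))"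
        using rank_add_le by metis
      also have "\<dots> \<le> 16"
        using rank_scale_le[of "(\<alpha> * e2 - \<beta> * e1) / DD" "d1 *\<^sub>R A + d2 *\<^sub>R B"]
          rank_scale_le[of "(\<beta> * d1 - \<alpha> * d2) / DD" "e1 *\<^sub>R A + e2 *\<^sub>R B"] r1 r2 by linarith
      finally show ?thesis using ab by simp
    next
      case False
      then have par: "d1 * (pb b - pb z) - d2 * (pa b - pa z) = 0" if "b \<in> Bs" for b using that by auto
      define y where "y = d1 *\<^sub>R (A *v z) + d2 *\<^sub>R (B *v z)"
      have yb: "orthogonal y b" if "b \<in> Bs" for b
      proof -
        have "d1 * (b \<bullet> (A *v z)) + d2 * (b \<bullet> (B *v z)) = 0"
          by (rule par_lemma[OF neq[OF that] key[OF that] par[OF that]])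
        then show ?thesis by (simp add: orthogonal_def y_def inner_add_left inner_commute[of _ b] inner_add_right)
      qed
      have "orthogonal y y" by (rule orthogonal_to_span[of y Bs y]) (use spB yb in auto)
      then have "y = 0" by (simp add: orthogonal_def)
      then have "d1 = 0 \<and> d2 = 0"
        using gd_comb[of "A *v z" "B *v z" d1 d2] gz by (simp add: gd_def y_def)
      then show ?thesis using dne by simp
    qed
  qed
qed

end
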